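(* Let $m = m_0 + x m_1 \in R_r$ satisfy $m \equiv x \pmod t$ and $\deg m_1 - \deg m_0 < -1$, and let $N \ge 1$. The map $\Phi_m : R_r/(t^N) \to \{0,1,x,1+x\}^N$ sending the class of $f$ to the first $N$ terms of its parity sequence is well defined and is a bijection. Moreover, for each $(p_0,\dots,p_{N-1}) \in \{0,1,x,1+x\}^N$, with $s(N) = \#\{0 \le k < N : p_k = 1+x\}$, there exist $g_{N-1}, h_{N-1} \in R_r$ with $\deg g_{N-1} < N$ and $\deg h_{N-1} < s(N)\deg m$ such that the elements of $R_r$ whose parity sequence begins with $(p_0,\dots,p_{N-1})$ are exactly those of the form $f = g_{N-1} + t^N q$ with $q \in R_r$, and for each such $f$ one has $T^N(f) = h_{N-1} + m^{s(N)} q$. In particular, the first $N$ parity terms of a uniformly random element of $R_r$ of degree $< N$ are uniformly distributed on $\{0,1,x,1+x\}^N$.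
   Context: Let $r(t) = t^2 + t + 1$ and $R_r = \mathbb{F}_2[x,t]/(x^2 + tx + r(t))$. Every $f \in R_r$ is uniquely $f = f_0(t) + x f_1(t)$ with $f_0, f_1 \in \mathbb{F}_2[t]$, and $\deg f = \max\{\deg f_0, \deg f_1\}$ (degrees in $t$, $\deg 0 = -\infty$). Modulo $t$ every element is congruent to exactly one of $0, 1, x, 1+x$. For $m \in R_r$ with $m \equiv x \pmod t$, the $mx+1$ map $T: R_r \to R_r$ is $T(f) = (mf + 1 + x)/t$ if $f \equiv 1+x$, $T(f) = (f+x)/t$ if $f \equiv x$, $T(f) = (f+1)/t$ if $f \equiv 1$, and $T(f) = f/t$ if $f \equiv 0 \pmod t$. The parity sequence of $f$ is $(p_0,p_1,\dots)$ where $p_k \in \{0,1,x,1+x\}$ is the residue of $T^k(f)$ modulo $t$. *)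

theory Defs
  imports "HOL-Library.Z2" "HOL-Computational_Algebra.Polynomial"
    "HOL-Probability.Probability_Mass_Function"
begin

text \<open>Elements of R_r = F_2[x,t]/(x^2 + t x + r(t)), r(t) = t^2 + t + 1, are represented
  by their unique normal form f0(t) + x f1(t) as the pair (f0, f1) of polynomials over F_2
  (the type bit of HOL-Library.Z2 is the field with two elements).\<close>

type_synonym R = "bit poly \<times> bit poly"

definition tP :: "bit poly" where "tP = [:0, 1:]"
definition rP :: "bit poly" where "rP = [:1, 1, 1:]"

definition zeroR :: R where "zeroR = (0, 0)"
definition oneR :: R where "oneR = (1, 0)"
definition xR :: R where "xR = (0, 1)"
definition onexR :: R where "onexR = (1, 1)"

definition addR :: "R \<Rightarrow> R \<Rightarrow> R" where
  "addR f g = (fst f + fst g, snd f + snd g)"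

text \<open>Multiplication using x^2 = t x + r(t) (characteristic 2).\<close>
definition mulR :: "R \<Rightarrow> R \<Rightarrow> R" where
  "mulR f g = (fst f * fst g + rP * snd f * snd g,
               fst f * snd g + snd f * fst g + tP * snd f * snd g)"

definition powR :: "R \<Rightarrow> nat \<Rightarrow> R" where
  "powR f n = ((mulR f) ^^ n) oneR"

definition tpowR :: "nat \<Rightarrow> R" where
  "tpowR N = (tP ^ N, 0)"

text \<open>Degree in t of a polynomial, with deg 0 = -infinity encoded as -1
  (only strict comparisons with non-negative bounds and the difference in the
  hypothesis are used, where this encoding is faithful).\<close>
definition pdeg :: "bit poly \<Rightarrow> int" where
  "pdeg p = (if p = 0 then -1 else int (degree p))"

definition degR :: "R \<Rightarrow> int" where
  "degR f = max (pdeg (fst f)) (pdeg (snd f))"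

definition residue :: "R \<Rightarrow> R" where
  "residue f = ([:coeff (fst f) 0:], [:coeff (snd f) 0:])"

text \<open>Exact division by t (applied only to multiples of t).\<close>
definition tdiv :: "R \<Rightarrow> R" where
  "tdiv f = (fst f div tP, snd f div tP)"

definition Tmap :: "R \<Rightarrow> R \<Rightarrow> R" where
  "Tmap m f =
     (if residue f = onexR then tdiv (addR (mulR m f) onexR)
      else if residue f = xR then tdiv (addR f xR)
      else if residue f = oneR then tdiv (addR f oneR)
      else tdiv f)"

definition parity :: "R \<Rightarrow> R \<Rightarrow> nat \<Rightarrow> R" where
  "parity m f k = residue ((Tmap m ^^ k) f)"

definition parity_prefix :: "R \<Rightarrow> nat \<Rightarrow> R \<Rightarrow> R list" where
  "parity_prefix m N f = map (parity m f) [0..<N]"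

definition Pars :: "nat \<Rightarrow> R list set" where
  "Pars N = {ps. length ps = N \<and> set ps \<subseteq> {zeroR, oneR, xR, onexR}}"

definition s_count :: "R list \<Rightarrow> nat" where
  "s_count ps = length (filter (\<lambda>p. p = onexR) ps)"

definition congR :: "nat \<Rightarrow> R \<Rightarrow> R \<Rightarrow> bool" where
  "congR N f g \<longleftrightarrow> (\<exists>q. f = addR g (mulR (tpowR N) q))"

definition congRel :: "nat \<Rightarrow> (R \<times> R) set" where
  "congRel N = {(f, g). congR N f g}"

definition PhiR :: "R \<Rightarrow> nat \<Rightarrow> R set \<Rightarrow> R list" where
  "PhiR m N C = the_elem (parity_prefix m N ` C)"

end

theory Submission
  imports Defs
begin
definition smulR :: "bit poly \<Rightarrow> R \<Rightarrow> R" where "smulR p f = (p * fst f, p * snd f)"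
definition tailR :: "R \<Rightarrow> R" where "tailR f = tdiv (addR f (residue f))"

lemma bit_add_self[simp]: "(a::bit) + a = 0" by (cases a) auto
lemma pt: "pCons 0 u = tP * u" by (simp add: tP_def)
lemma tP_nz[simp]: "tP \<noteq> 0" by (simp add: tP_def)
lemma coeff_tP0[simp]: "coeff tP 0 = 0" by (simp add: tP_def)
lemma coeff_rP0[simp]: "coeff rP 0 = 1" by (simp add: rP_def)

lemma comp_dec: "[:coeff p 0:] + tP * ((p + [:coeff p 0:]) div tP) = p"
proof -
  obtain a u where p: "p = pCons a u" by (cases p) auto
  have h: "p + [:coeff p 0:] = tP * u" using p by (simp add: pt)
  have "[:coeff p 0:] + tP * u = p" using p by (simp add: pt[symmetric])
  then show ?thesis using h by simp
qed

lemma dec: "f = addR (residue f) (smulR tP (tailR f))"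
  using comp_dec[of "fst f"] comp_dec[of "snd f"]
  by (simp add: addR_def residue_def smulR_def tailR_def tdiv_def)

lemma residue_add: "residue (addR a b) = addR (residue a) (residue b)"
  by (simp add: addR_def residue_def)

lemma residue_tsmul: "residue (addR F (smulR tP u)) = residue F"
  by (simp add: addR_def residue_def smulR_def coeff_mult_0)

lemma tailR_tsmul: "tailR (addR F (smulR tP u)) = addR (tailR F) u"
proof -
  have "tailR (addR F (smulR tP u)) = tdiv (addR (addR F (residue F)) (smulR tP u))"
    by (simp add: tailR_def residue_tsmul) (simp add: addR_def algebra_simps)
  also have "\<dots> = addR (tailR F) u"
    by (simp add: tailR_def tdiv_def addR_def smulR_def mult.commute[of tP])
  finally show ?thesis .
qed

definition KK :: "R set" where "KK = {zeroR, oneR, xR, onexR}"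

lemma c1[simp]: "([:a:] = (1::bit poly)) = (a = 1)" by (simp add: one_pCons)
lemma bit_cases2: "(a::bit) = 0 \<or> a = 1" by (cases a) auto

lemma residue_K: "residue f \<in> KK"
  using bit_cases2[of "coeff (fst f) 0"] bit_cases2[of "coeff (snd f) 0"]
  by (auto simp: KK_def residue_def zeroR_def oneR_def xR_def onexR_def)

lemma residue_mul: "residue (mulR a b) =
   ([:coeff (fst a) 0 * coeff (fst b) 0 + coeff (snd a) 0 * coeff (snd b) 0:],
    [:coeff (fst a) 0 * coeff (snd b) 0 + coeff (snd a) 0 * coeff (fst b) 0:])"
  by (simp add: residue_def mulR_def coeff_mult_0)

lemma Tmap_tail:
  assumes "residue m = xR"
  shows "Tmap m f = tailR (if residue f = onexR then mulR m f else f)"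
proof (cases "residue f = onexR")
  case True
  have "residue (mulR m f) = onexR" using True assms
    by (simp add: residue_mul) (auto simp add: residue_def xR_def onexR_def)
  then show ?thesis using True by (simp add: Tmap_def tailR_def)
next
  case False
  then have "residue f = xR \<or> residue f = oneR \<or> residue f = zeroR"
    using residue_K[of f] by (auto simp: KK_def)
  then show ?thesis using False
    by (auto simp: Tmap_def tailR_def addR_def zeroR_def xR_def oneR_def onexR_def)
qed
lemma mulR_assoc: "mulR a (mulR b c) = mulR (mulR a b) c"
  by (simp add: mulR_def algebra_simps)
lemma mulR_add: "mulR a (addR b c) = addR (mulR a b) (mulR a c)"
  by (simp add: mulR_def addR_def algebra_simps)
lemma mulR_smul: "mulR a (smulR p c) = smulR p (mulR a c)"
  by (simp add: mulR_def smulR_def algebra_simps)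
lemma mulR_one[simp]: "mulR oneR q = q" by (simp add: mulR_def oneR_def)
lemma smulR_one[simp]: "smulR 1 q = q" by (simp add: smulR_def)
lemma smulR_mult: "smulR (a * b) q = smulR a (smulR b q)" by (simp add: smulR_def algebra_simps)
lemma powR_0[simp]: "powR m 0 = oneR" by (simp add: powR_def)
lemma powR_Suc: "powR m (Suc s) = mulR m (powR m s)" by (simp add: powR_def)
lemma tpowR_smul: "mulR (tpowR n) q = smulR (tP ^ n) q"
  by (simp add: mulR_def tpowR_def smulR_def)

lemma shift:
  assumes "residue m = xR"
  shows "Tmap m (addR f (smulR tP q)) = addR (Tmap m f) (if residue f = onexR then mulR m q else q)"
  using assms by (simp add: Tmap_tail residue_tsmul mulR_add mulR_smul tailR_tsmul)

definition sc :: "R \<Rightarrow> nat \<Rightarrow> R \<Rightarrow> nat" where "sc m k f = s_count (parity_prefix m k f)"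

lemma pp_Suc: "parity_prefix m (Suc k) f = parity_prefix m k f @ [parity m f k]"
  by (simp add: parity_prefix_def)
lemma sc_Suc: "sc m (Suc k) f = sc m k f + (if parity m f k = onexR then 1 else 0)"
  by (simp add: sc_def pp_Suc s_count_def)
lemma pp_0[simp]: "parity_prefix m 0 f = []" by (simp add: parity_prefix_def)

lemma iter:
  assumes m: "residue m = xR"
  shows "k \<le> n \<Longrightarrow> (Tmap m ^^ k) (addR f (smulR (tP^n) q))
     = addR ((Tmap m ^^ k) f) (smulR (tP^(n-k)) (mulR (powR m (sc m k f)) q))
    \<and> parity_prefix m k (addR f (smulR (tP^n) q)) = parity_prefix m k f"
proof (induction k)
  case 0
  then show ?case by (simp add: sc_def s_count_def)
next
  case (Suc k)
  define A where "A = (Tmap m ^^ k) f"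
  define X where "X = mulR (powR m (sc m k f)) q"
  define j where "j = n - Suc k"
  have nk: "n - k = Suc j" using Suc.prems j_def by simp
  from Suc have IH: "(Tmap m ^^ k) (addR f (smulR (tP^n) q)) = addR A (smulR tP (smulR (tP^j) X))"
    and IH2: "parity_prefix m k (addR f (smulR (tP^n) q)) = parity_prefix m k f"
    by (simp_all add: A_def X_def nk smulR_mult)
  have par: "parity m (addR f (smulR (tP^n) q)) k = parity m f k"
    by (simp add: parity_def IH residue_tsmul A_def)
  have "(Tmap m ^^ Suc k) (addR f (smulR (tP^n) q)) =
     addR (Tmap m A) (if residue A = onexR then mulR m (smulR (tP^j) X) else smulR (tP^j) X)"
    by (simp add: IH shift[OF m])
  also have "\<dots> = addR ((Tmap m ^^ Suc k) f) (smulR (tP^(n - Suc k)) (mulR (powR m (sc m (Suc k) f)) q))"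
    by (simp add: A_def X_def j_def sc_Suc parity_def mulR_smul mulR_assoc powR_Suc)
  finally show ?case using IH2 par by (simp add: pp_Suc)
qed
definition dltP :: "nat \<Rightarrow> bit poly \<Rightarrow> bool" where "dltP n p = (p = 0 \<or> degree p < n)"
definition dltR :: "nat \<Rightarrow> R \<Rightarrow> bool" where "dltR n f = (dltP n (fst f) \<and> dltP n (snd f))"

lemma dltP_add: "dltP a p \<Longrightarrow> dltP a q \<Longrightarrow> dltP a (p + q)"
  unfolding dltP_def by (cases "p = 0"; cases "q = 0") (auto intro: degree_add_less)
lemma dltP_mono: "dltP a p \<Longrightarrow> a \<le> b \<Longrightarrow> dltP b p"
  unfolding dltP_def by auto
lemma dltP_mul: "dltP a p \<Longrightarrow> degree q \<le> e \<Longrightarrow> dltP (a + e) (q * p)"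
  unfolding dltP_def using degree_mult_le[of q p] by (cases "p = 0") auto

lemma dltP_tail: "dltP L p \<Longrightarrow> dltP (L - 1) ((p + [:coeff p 0:]) div tP)"
proof -
  assume a: "dltP L p"
  obtain c u where p: "p = pCons c u" by (cases p) auto
  have "(p + [:coeff p 0:]) div tP = u" using p by (simp add: pt)
  moreover have "dltP (L - 1) u" using a p unfolding dltP_def
    by (cases "u = 0") auto
  ultimately show ?thesis by simp
qed

lemma dltR_tail: "dltR L F \<Longrightarrow> dltR (L - 1) (tailR F)"
  using dltP_tail[of L "fst F"] dltP_tail[of L "snd F"]
  by (simp add: dltR_def tailR_def tdiv_def addR_def residue_def)

lemma deg_tP[simp]: "degree tP = 1" by (simp add: tP_def)
lemma deg_rP[simp]: "degree rP = 2" by (simp add: rP_def)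

lemma dltR_mul:
  assumes D: "degree (snd m) + 2 \<le> degree (fst m)" and f: "dltR L f"
  shows "dltR (L + degree (fst m)) (mulR m f)"
proof -
  let ?D = "degree (fst m)"
  have f0: "dltP L (fst f)" and f1: "dltP L (snd f)" using f by (auto simp: dltR_def)
  have a: "dltP (L + ?D) (fst m * fst f)" by (rule dltP_mul[OF f0]) simp
  have "degree (rP * snd m) \<le> ?D" using degree_mult_le[of rP "snd m"] D by simp
  then have b: "dltP (L + ?D) (rP * snd m * snd f)" by (rule dltP_mul[OF f1])
  have c: "dltP (L + ?D) (fst m * snd f)" by (rule dltP_mul[OF f1]) simp
  have "dltP (L + ?D) (snd m * fst f)" by (rule dltP_mul[OF f0]) (use D in simp)
  moreover have "degree (tP * snd m) \<le> ?D" using degree_mult_le[of tP "snd m"] D by simp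
  then have e: "dltP (L + ?D) (tP * snd m * snd f)" by (rule dltP_mul[OF f1])
  ultimately show ?thesis using a b c
    by (simp add: dltR_def mulR_def dltP_add)
qed


lemma deg_iter:
  assumes m: "residue m = xR" and D: "degree (snd m) + 2 \<le> degree (fst m)" and f: "dltR n f"
  shows "k \<le> n \<Longrightarrow> dltR (n - k + sc m k f * degree (fst m)) ((Tmap m ^^ k) f)"
proof (induction k)
  case 0
  then show ?case using f by (simp add: sc_def s_count_def)
next
  case (Suc k)
  define A where "A = (Tmap m ^^ k) f"
  define L where "L = n - k + sc m k f * degree (fst m)"
  have IH: "dltR L A" using Suc by (simp add: A_def L_def)
  show ?case
  proof (cases "residue A = onexR")
    case True
    have "dltR (L + degree (fst m) - 1) (tailR (mulR m A))"
      using dltR_tail[OF dltR_mul[OF D IH]] by simp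
    moreover have "L + degree (fst m) - 1 = n - Suc k + sc m (Suc k) f * degree (fst m)"
      using True Suc.prems by (simp add: L_def sc_Suc parity_def A_def)
    moreover have "(Tmap m ^^ Suc k) f = tailR (mulR m A)"
      using True Tmap_tail[OF m, of A] by (simp add: A_def)
    ultimately show ?thesis by simp
  next
    case False
    have "dltR (L - 1) (tailR A)" using dltR_tail[OF IH] by simp
    moreover have "L - 1 = n - Suc k + sc m (Suc k) f * degree (fst m)"
      using False Suc.prems by (simp add: L_def sc_Suc parity_def A_def)
    moreover have "(Tmap m ^^ Suc k) f = tailR A"
      using False Tmap_tail[OF m, of A] by (simp add: A_def)
    ultimately show ?thesis by simp
  qed
qed
lemma KK_iff: "c \<in> KK \<longleftrightarrow> (\<exists>a b. c = ([:a:], [:b:]))"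
proof
  assume "c \<in> KK" then show "\<exists>a b. c = ([:a:], [:b:])"
    by (auto simp: KK_def zeroR_def oneR_def xR_def onexR_def one_pCons)
next
  assume "\<exists>a b. c = ([:a:], [:b:])"
  then obtain a b where c: "c = ([:a:], [:b:])" by blast
  show "c \<in> KK" using bit_cases2[of a] bit_cases2[of b] c
    by (auto simp: KK_def zeroR_def oneR_def xR_def onexR_def one_pCons)
qed

lemma coeff_mul0[simp]:
  "coeff (fst (mulR a b)) 0 = coeff (fst a) 0 * coeff (fst b) 0 + coeff (snd a) 0 * coeff (snd b) 0"
  "coeff (snd (mulR a b)) 0 = coeff (fst a) 0 * coeff (snd b) 0 + coeff (snd a) 0 * coeff (fst b) 0"
  by (simp_all add: mulR_def coeff_mult_0)
lemma coeff_add0[simp]: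
  "coeff (fst (addR a b)) 0 = coeff (fst a) 0 + coeff (fst b) 0"
  "coeff (snd (addR a b)) 0 = coeff (snd a) 0 + coeff (snd b) 0"
  by (simp_all add: addR_def)
lemma bit_canc[simp]: "(a::bit) + (b + a) = b" "(a::bit) + (a + b) = b" by (cases a; cases b; simp)+

lemma residue_eq: "residue f = residue g \<longleftrightarrow> coeff (fst f) 0 = coeff (fst g) 0 \<and> coeff (snd f) 0 = coeff (snd g) 0"
  by (simp add: residue_def)
lemma residue_oneR: "residue f = oneR \<longleftrightarrow> coeff (fst f) 0 = 1 \<and> coeff (snd f) 0 = 0"
  by (simp add: residue_def oneR_def one_pCons)
lemma residue_xR: "residue f = xR \<longleftrightarrow> coeff (fst f) 0 = 0 \<and> coeff (snd f) 0 = 1"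
  by (simp add: residue_def xR_def one_pCons)

lemma residue_P:
  assumes "residue m = xR" shows "residue (powR m s) = oneR \<or> residue (powR m s) = xR"
proof (induction s)
  case 0 then show ?case by (simp add: residue_def oneR_def)
next
  case (Suc s)
  have m0: "coeff (fst m) 0 = 0" "coeff (snd m) 0 = 1" using assms
    by (auto simp: residue_xR)
  from Suc show ?case
    by (auto simp: powR_Suc m0 residue_oneR residue_xR)
qed

lemma solve_ex:
  assumes P: "residue P = oneR \<or> residue P = xR" and p: "p \<in> KK"
  shows "\<exists>c \<in> KK. residue (addR h (mulR P c)) = p"
proof -
  obtain p0 p1 where pp: "p = ([:p0:],[:p1:])" using p KK_iff by blast
  let ?h0 = "coeff (fst h) 0" and ?h1 = "coeff (snd h) 0"
  from P show ?thesis
  proof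
    assume a: "residue P = oneR"
    have P0: "coeff (fst P) 0 = 1" "coeff (snd P) 0 = 0" using a by (auto simp: residue_oneR)
    show ?thesis
      by (rule bexI[of _ "([:p0 + ?h0:], [:p1 + ?h1:])"])
        (auto simp: KK_iff P0 pp residue_def)
  next
    assume a: "residue P = xR"
    have P0: "coeff (fst P) 0 = 0" "coeff (snd P) 0 = 1" using a by (auto simp: residue_xR)
    show ?thesis
      by (rule bexI[of _ "([:p1 + ?h1:], [:p0 + ?h0:])"])
        (auto simp: KK_iff P0 pp residue_def)
  qed
qed

lemma solve_uniq:
  assumes P: "residue P = oneR \<or> residue P = xR" and c: "c \<in> KK" and c': "c' \<in> KK"
    and e: "residue (addR h (mulR P c)) = residue (addR h (mulR P c'))"
  shows "c = c'"
proof -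
  obtain a b where cc: "c = ([:a:],[:b:])" using c KK_iff by blast
  obtain a' b' where cc': "c' = ([:a':],[:b':])" using c' KK_iff by blast
  have "coeff (fst (mulR P c)) 0 = coeff (fst (mulR P c')) 0 \<and> coeff (snd (mulR P c)) 0 = coeff (snd (mulR P c')) 0"
    using e by (simp only: residue_eq coeff_add0 add_left_cancel)
  then have eq: "coeff (fst P) 0 * a + coeff (snd P) 0 * b = coeff (fst P) 0 * a' + coeff (snd P) 0 * b'
     \<and> coeff (fst P) 0 * b + coeff (snd P) 0 * a = coeff (fst P) 0 * b' + coeff (snd P) 0 * a'"
    by (simp only: cc cc' coeff_mul0 fst_conv snd_conv coeff_pCons_0)
  from P have "(coeff (fst P) 0 = 1 \<and> coeff (snd P) 0 = 0) \<or> (coeff (fst P) 0 = 0 \<and> coeff (snd P) 0 = 1)"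
    by (simp only: residue_oneR residue_xR)
  then have "a = a' \<and> b = b'" using eq
    by (elim disjE; simp only: mult_1_left mult_zero_left add_0_right add_0; blast)
  then show ?thesis by (simp add: cc cc')
qed
lemma add_zero_smul[simp]: "addR g (smulR p (0,0)) = g" by (simp add: addR_def smulR_def)

lemma alg1: "addR g (smulR (tP^N) (addR c (smulR tP u))) = addR (addR g (smulR (tP^N) c)) (smulR (tP^(Suc N)) u)"
  by (simp add: addR_def smulR_def algebra_simps)
lemma alg2: "addR h (mulR P (addR c (smulR tP u))) = addR (addR h (mulR P c)) (smulR tP (mulR P u))"
  by (simp add: mulR_add mulR_smul) (simp add: addR_def algebra_simps)

lemma iterN:
  assumes m: "residue m = xR"
  shows "(Tmap m ^^ n) (addR f (smulR (tP^n) q)) = addR ((Tmap m ^^ n) f) (mulR (powR m (sc m n f)) q)"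
  using iter[OF m, of n n f q] by simp

lemma dltP_const: "dltP 1 [:a:]" by (simp add: dltP_def)

lemma construct:
  assumes m: "residue m = xR"
  shows "set ps \<subseteq> KK \<Longrightarrow> \<exists>g. dltR (length ps) g \<and>
     (\<forall>f. parity_prefix m (length ps) f = ps \<longleftrightarrow> (\<exists>q. f = addR g (smulR (tP^(length ps)) q)))"
proof (induction ps rule: rev_induct)
  case Nil
  show ?case
    by (rule exI[of _ zeroR]) (auto simp: dltR_def dltP_def zeroR_def addR_def smulR_def)
next
  case (snoc p ps)
  define N where "N = length ps"
  from snoc obtain g where dg: "dltR N g"
    and ch: "\<And>f. parity_prefix m N f = ps \<longleftrightarrow> (\<exists>q. f = addR g (smulR (tP^N) q))"
    by (auto simp: N_def)
  have pg: "parity_prefix m N g = ps" using ch[of g] by (metis add_zero_smul)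
  define s where "s = s_count ps"
  define P where "P = powR m s"
  define h where "h = (Tmap m ^^ N) g"
  have Tf: "(Tmap m ^^ N) (addR g (smulR (tP^N) q)) = addR h (mulR P q)" for q
    using iterN[OF m, of N g q] by (simp add: h_def P_def s_def sc_def pg)
  have RP: "residue P = oneR \<or> residue P = xR" using residue_P[OF m] by (simp add: P_def)
  have pK: "p \<in> KK" using snoc by auto
  obtain c where cK: "c \<in> KK" and hc: "residue (addR h (mulR P c)) = p"
    using solve_ex[OF RP pK] by blast
  define g' where "g' = addR g (smulR (tP^N) c)"
  have "dltR (Suc N) g'"
  proof -
    obtain a b where cc: "c = ([:a:],[:b:])" using cK KK_iff by blast
    have "degree (tP^N) \<le> N" using degree_power_le[of tP N] by simp
    then have "dltP (1 + N) (tP^N * [:a:])" "dltP (1 + N) (tP^N * [:b:])"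
      using dltP_mul[OF dltP_const] by blast+
    moreover have "dltP (Suc N) (fst g)" "dltP (Suc N) (snd g)"
      using dg by (auto simp: dltR_def intro: dltP_mono)
    ultimately show ?thesis
      by (simp add: g'_def dltR_def addR_def smulR_def cc dltP_add)
  qed
  moreover have "parity_prefix m (Suc N) f = ps @ [p] \<longleftrightarrow> (\<exists>q. f = addR g' (smulR (tP^(Suc N)) q))" for f
  proof
    assume a: "parity_prefix m (Suc N) f = ps @ [p]"
    then have a1: "parity_prefix m N f = ps" and a2: "parity m f N = p" by (simp_all add: pp_Suc)
    obtain q where fq: "f = addR g (smulR (tP^N) q)" using a1 ch by blast
    define u where "u = tailR q"
    have qd: "q = addR (residue q) (smulR tP u)" using dec[of q] by (simp add: u_def)
    have "residue (addR h (mulR P (residue q))) = p"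
      using a2 unfolding parity_def fq Tf
      by (subst (asm) qd, simp only: alg2 residue_tsmul)
    then have "residue q = c" using solve_uniq[OF RP _ cK, of "residue q" h] hc residue_K[of q] by simp
    then have "f = addR g' (smulR (tP^(Suc N)) u)"
      using fq qd alg1 g'_def by metis
    then show "\<exists>q. f = addR g' (smulR (tP^(Suc N)) q)" by blast
  next
    assume "\<exists>q. f = addR g' (smulR (tP^(Suc N)) q)"
    then obtain u where fu: "f = addR g' (smulR (tP^(Suc N)) u)" by blast
    then have fu': "f = addR g (smulR (tP^N) (addR c (smulR tP u)))" by (simp add: alg1 g'_def)
    then have "parity_prefix m N f = ps" using ch by blast
    moreover have "parity m f N = p"
      unfolding parity_def fu' Tf alg2 residue_tsmul using hc .
    ultimately show "parity_prefix m (Suc N) f = ps @ [p]" by (simp add: pp_Suc)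
  qed
  ultimately have "\<exists>g. dltR (Suc N) g \<and> (\<forall>f. parity_prefix m (Suc N) f = ps @ [p] \<longleftrightarrow> (\<exists>q. f = addR g (smulR (tP^(Suc N)) q)))"
    by blast
  then show ?case by (simp only: length_append_singleton N_def)
qed
lemma poly_self_add[simp]: "(p::bit poly) + p = 0"
  by (rule poly_eqI) (simp only: coeff_add coeff_0 bit_add_self)
lemma poly_two[simp]: "(2::bit poly) = 0"
  by (metis one_add_one poly_self_add)
lemma poly_canc[simp]: "(p::bit poly) + (p + q) = q"
  by (simp only: add.assoc[symmetric] poly_self_add add_0)

lemma congR_iff: "congR N f g \<longleftrightarrow> (\<exists>q. f = addR g (smulR (tP^N) q))"
  by (simp add: congR_def tpowR_smul)

lemma congR_sym: "congR N f g \<Longrightarrow> congR N g f"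
  unfolding congR_iff
  apply (elim exE)
  subgoal for q by (rule exI[of _ q]) (simp add: addR_def smulR_def add.assoc)
  done

lemma congR_trans: "congR N f g \<Longrightarrow> congR N g h \<Longrightarrow> congR N f h"
  unfolding congR_iff
  apply (elim exE)
  subgoal for q1 q2 by (rule exI[of _ "addR q1 q2"]) (simp add: addR_def smulR_def algebra_simps)
  done

lemma congR_refl: "congR N f f"
  unfolding congR_iff by (rule exI[of _ "(0,0)"]) simp

lemma equiv_cong: "equiv UNIV (congRel N)"
proof (rule equivI)
  show "congRel N \<subseteq> UNIV \<times> UNIV" by simp
  show "refl (congRel N)" unfolding refl_on_def congRel_def by (simp add: congR_refl)
  show "sym (congRel N)" by (rule symI) (simp add: congRel_def congR_sym)
  show "trans (congRel N)" by (rule transI) (simp add: congRel_def, metis congR_trans)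
qed

lemma dltR_degR: "dltR n f \<longleftrightarrow> degR f < int n"
  by (auto simp: dltR_def dltP_def degR_def pdeg_def)

lemma dltP_uniq: "dltP N p1 \<Longrightarrow> dltP N p2 \<Longrightarrow> p1 = p2 + tP^N * r \<Longrightarrow> r = 0"
proof (rule ccontr)
  assume a: "dltP N p1" "dltP N p2" "p1 = p2 + tP^N * r" "r \<noteq> 0"
  have "tP^N * r = p1 + p2" using a(3) by (simp add: add.commute add.left_commute)
  then have d: "dltP N (tP^N * r)" using dltP_add[OF a(1) a(2)] by simp
  have "tP^N * r \<noteq> 0" using a(4) by simp
  moreover have "degree (tP^N * r) = N + degree r"
    using a(4) by (simp add: degree_mult_eq degree_power_eq)
  ultimately show False using d by (simp add: dltP_def)
qed

lemma dltR_uniq: "dltR N f \<Longrightarrow> dltR N g \<Longrightarrow> f = addR g (smulR (tP^N) q) \<Longrightarrow> f = g"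
  using dltP_uniq[of N "fst f" "fst g" "fst q"] dltP_uniq[of N "snd f" "snd g" "snd q"]
  by (auto simp: dltR_def addR_def smulR_def prod_eq_iff)
lemma Pars_KK: "Pars N = {ps. set ps \<subseteq> KK \<and> length ps = N}"
  unfolding Pars_def KK_def by (simp only: conj_commute)

lemma pp_Pars: "parity_prefix m N f \<in> Pars N"
  unfolding Pars_KK parity_prefix_def parity_def by (simp add: image_subset_iff residue_K)

theorem mainTheorem10:
  fixes m :: R and N :: nat
  assumes "residue m = xR"
    and "pdeg (snd m) - pdeg (fst m) < -1"
    and "N \<ge> 1"
  shows "(\<forall>f g. congR N f g \<longrightarrow> parity_prefix m N f = parity_prefix m N g)
    \<and> bij_betw (PhiR m N) (UNIV // congRel N) (Pars N)
    \<and> (\<forall>ps \<in> Pars N. \<exists>g h. degR g < int N \<and> degR h < int (s_count ps) * degR m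
          \<and> (\<forall>f. parity_prefix m N f = ps \<longleftrightarrow> (\<exists>q. f = addR g (mulR (tpowR N) q)))
          \<and> (\<forall>q. (Tmap m ^^ N) (addR g (mulR (tpowR N) q))
                  = addR h (mulR (powR m (s_count ps)) q)))
    \<and> map_pmf (parity_prefix m N) (pmf_of_set {f. degR f < int N}) = pmf_of_set (Pars N)"
proof -
  note m = assms(1)
  have m1: "snd m \<noteq> 0" using m by (auto simp: residue_xR)
  have m0: "fst m \<noteq> 0" using assms(2) m1 by (auto simp: pdeg_def)
  have D: "degree (snd m) + 2 \<le> degree (fst m)" using assms(2) m1 m0 by (simp add: pdeg_def)
  have degm: "degR m = int (degree (fst m))" using D m0 m1 by (simp add: degR_def pdeg_def)
  have P1: "\<forall>f g. congR N f g \<longrightarrow> parity_prefix m N f = parity_prefix m N g"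
    using iter[OF m, of N N] by (auto simp: congR_iff)
  have C: "ps \<in> Pars N \<Longrightarrow> \<exists>g. dltR N g \<and>
     (\<forall>f. parity_prefix m N f = ps \<longleftrightarrow> (\<exists>q. f = addR g (smulR (tP^N) q)))" for ps
    using construct[OF m, of ps] by (auto simp: Pars_KK)
  have samecong: "congR N f g" if "parity_prefix m N f = parity_prefix m N g" for f g
  proof -
    obtain G where G: "\<And>h. parity_prefix m N h = parity_prefix m N g \<longleftrightarrow> (\<exists>q. h = addR G (smulR (tP^N) q))"
      using C[OF pp_Pars[of m N g]] by blast
    have "\<exists>q. f = addR G (smulR (tP^N) q)" using G[of f] that by blast
    moreover have "\<exists>q. g = addR G (smulR (tP^N) q)" using G[of g] by blast
    ultimately have "congR N f G" "congR N g G" by (simp_all only: congR_iff)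
    then show ?thesis using congR_sym congR_trans by blast
  qed
  have P3: "\<forall>ps \<in> Pars N. \<exists>g h. degR g < int N \<and> degR h < int (s_count ps) * degR m
          \<and> (\<forall>f. parity_prefix m N f = ps \<longleftrightarrow> (\<exists>q. f = addR g (mulR (tpowR N) q)))
          \<and> (\<forall>q. (Tmap m ^^ N) (addR g (mulR (tpowR N) q))
                  = addR h (mulR (powR m (s_count ps)) q))"
  proof
    fix ps assume ps: "ps \<in> Pars N"
    obtain g where dg: "dltR N g" and ch: "\<forall>f. parity_prefix m N f = ps \<longleftrightarrow> (\<exists>q. f = addR g (smulR (tP^N) q))"
      using C[OF ps] by blast
    have pg: "parity_prefix m N g = ps" using ch by (metis add_zero_smul)
    have sg: "sc m N g = s_count ps" by (simp add: sc_def pg)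
    define h where "h = (Tmap m ^^ N) g"
    have "dltR (s_count ps * degree (fst m)) h"
      using deg_iter[OF m D dg, of N] by (simp add: h_def sg)
    then have "degR h < int (s_count ps) * degR m" by (simp add: dltR_degR degm)
    moreover have "degR g < int N" using dg by (simp add: dltR_degR)
    moreover have "\<forall>q. (Tmap m ^^ N) (addR g (mulR (tpowR N) q)) = addR h (mulR (powR m (s_count ps)) q)"
      using iterN[OF m, of N g] by (simp add: tpowR_smul h_def sg)
    ultimately show "\<exists>g h. degR g < int N \<and> degR h < int (s_count ps) * degR m
          \<and> (\<forall>f. parity_prefix m N f = ps \<longleftrightarrow> (\<exists>q. f = addR g (mulR (tpowR N) q)))
          \<and> (\<forall>q. (Tmap m ^^ N) (addR g (mulR (tpowR N) q))
                  = addR h (mulR (powR m (s_count ps)) q))"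
      unfolding tpowR_smul using ch by blast
  qed
  have cls: "PhiR m N (congRel N `` {f}) = parity_prefix m N f" for f
  proof -
    have "parity_prefix m N ` (congRel N `` {f}) = {parity_prefix m N f}"
    proof -
      have "f = addR f (smulR (tP^N) (0,0))" by simp
      then have ff: "congR N f f" unfolding congR_iff by blast
      have mem: "congRel N `` {f} = {y. congR N f y}" by (auto simp: congRel_def)
      have e: "\<And>y. congR N f y \<Longrightarrow> parity_prefix m N y = parity_prefix m N f" using P1 by metis
      show ?thesis unfolding mem using e ff by blast
    qed
    then show ?thesis by (simp add: PhiR_def)
  qed
  have P2: "bij_betw (PhiR m N) (UNIV // congRel N) (Pars N)"
    unfolding bij_betw_def
  proof
    show "inj_on (PhiR m N) (UNIV // congRel N)"
    proof (rule inj_onI)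
      fix X Y assume X: "X \<in> UNIV // congRel N" and Y: "Y \<in> UNIV // congRel N" and e: "PhiR m N X = PhiR m N Y"
      from X obtain f where f: "X = congRel N `` {f}" by (auto elim: quotientE)
      from Y obtain g where g: "Y = congRel N `` {g}" by (auto elim: quotientE)
      have "congR N f g" using samecong e f g cls by simp
      then show "X = Y" using f g equiv_class_eq[OF equiv_cong] by (simp add: congRel_def)
    qed
    show "PhiR m N ` (UNIV // congRel N) = Pars N"
    proof
      show "PhiR m N ` (UNIV // congRel N) \<subseteq> Pars N"
      proof
        fix Y assume "Y \<in> PhiR m N ` (UNIV // congRel N)"
        then obtain X where X: "X \<in> UNIV // congRel N" and Y: "Y = PhiR m N X" by blast
        from X obtain f where "X = congRel N `` {f}" by (auto elim: quotientE)
        then have "Y = parity_prefix m N f" using Y cls by simp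
        then show "Y \<in> Pars N" using pp_Pars by simp
      qed
      show "Pars N \<subseteq> PhiR m N ` (UNIV // congRel N)"
      proof
        fix ps assume ps: "ps \<in> Pars N"
        obtain g where "\<forall>f. parity_prefix m N f = ps \<longleftrightarrow> (\<exists>q. f = addR g (smulR (tP^N) q))"
          using C[OF ps] by blast
        then have pg: "parity_prefix m N g = ps" by (metis add_zero_smul)
        have "congRel N `` {g} \<in> UNIV // congRel N" by (rule quotientI) simp
        then show "ps \<in> PhiR m N ` (UNIV // congRel N)" using cls pg by (metis image_eqI)
      qed
    qed
  qed
  define A where "A = {f. degR f < int N}"
  have inj: "inj_on (parity_prefix m N) A"
  proof (rule inj_onI)
    fix f g assume f: "f \<in> A" and g: "g \<in> A" and e: "parity_prefix m N f = parity_prefix m N g"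
    obtain q where "f = addR g (smulR (tP^N) q)" using samecong[OF e] by (auto simp: congR_iff)
    then show "f = g" using dltR_uniq f g by (auto simp: A_def dltR_degR)
  qed
  have img: "parity_prefix m N ` A = Pars N"
  proof
    show "parity_prefix m N ` A \<subseteq> Pars N" using pp_Pars[of m N] by blast
    show "Pars N \<subseteq> parity_prefix m N ` A"
    proof
      fix ps assume ps: "ps \<in> Pars N"
      obtain g where dg: "dltR N g" and "\<forall>f. parity_prefix m N f = ps \<longleftrightarrow> (\<exists>q. f = addR g (smulR (tP^N) q))"
        using C[OF ps] by blast
      then have pg: "parity_prefix m N g = ps" by (metis add_zero_smul)
      have "g \<in> A" using dg by (simp add: A_def dltR_degR)
      then show "ps \<in> parity_prefix m N ` A" using pg by blast
    qed
  qed
  have finP: "finite (Pars N)"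
    unfolding Pars_KK by (rule finite_lists_length_eq) (simp add: KK_def)
  have finA: "finite A" using finite_imageD[of "parity_prefix m N" A] inj img finP by simp
  have neA: "A \<noteq> {}" by (auto simp: A_def intro!: exI[of _ zeroR] simp: degR_def pdeg_def zeroR_def)
  have P4: "map_pmf (parity_prefix m N) (pmf_of_set {f. degR f < int N}) = pmf_of_set (Pars N)"
    using map_pmf_of_set_inj[OF inj neA finA] img by (simp add: A_def)
  show ?thesis using P1 P2 P3 P4 by blast
qed
end
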